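(* Let $f(z)=z+\sum_{n\ge 2}a_nz^n\in\mathcal{BT}_{\mathfrak{B}}$. Then $$|a_2a_3-a_4|\le\frac18.$$ The inequality is sharp, with equality for $f_3(z)=\int_0^z\sqrt{1+\tanh(t^3)}\,dt$.
   Context: $\mathbb{D}=\{z\in\mathbb{C}:|z|<1\}$. $\mathcal{S}$ is the class of univalent analytic functions $f$ on $\mathbb{D}$ normalized by $f(0)=0$, $f'(0)=1$, i.e. $f(z)=z+\sum_{n\ge2}a_nz^n$. For analytic $g,h$ on $\mathbb{D}$, $g\prec h$ means there is an analytic $\omega:\mathbb{D}\to\mathbb{D}$ with $\omega(0)=0$ and $g=h\circ\omega$. Let $\mathfrak{B}(z)=\sqrt{1+\tanh z}$ (principal branch, $\mathfrak{B}(0)=1$). The class $\mathcal{BT}_{\mathfrak{B}}$ is $\{f\in\mathcal{S}: f'(z)\prec \mathfrak{B}(z)\}$. *)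

theory Defs
  imports "HOL-Complex_Analysis.Complex_Analysis"
begin

abbreviation unit_disk :: "complex set" where "unit_disk \<equiv> ball 0 1"

definition class_S :: "(complex \<Rightarrow> complex) set" where
  "class_S = {f. f holomorphic_on unit_disk \<and> inj_on f unit_disk \<and> f 0 = 0 \<and> deriv f 0 = 1}"

definition subordinate :: "(complex \<Rightarrow> complex) \<Rightarrow> (complex \<Rightarrow> complex) \<Rightarrow> bool" where
  "subordinate g h \<longleftrightarrow> (\<exists>\<omega>. \<omega> holomorphic_on unit_disk \<and> \<omega> ` unit_disk \<subseteq> unit_disk \<and>
       \<omega> 0 = 0 \<and> (\<forall>z\<in>unit_disk. g z = h (\<omega> z)))"

definition frakB :: "complex \<Rightarrow> complex" where
  "frakB z = csqrt (1 + tanh z)"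

definition class_BT :: "(complex \<Rightarrow> complex) set" where
  "class_BT = {f \<in> class_S. subordinate (deriv f) frakB}"

definition taylor_coeff :: "(complex \<Rightarrow> complex) \<Rightarrow> nat \<Rightarrow> complex" where
  "taylor_coeff f n = (deriv ^^ n) f 0 / fact n"

definition f3 :: "complex \<Rightarrow> complex" where
  "f3 z = contour_integral (linepath 0 z) (\<lambda>t. csqrt (1 + tanh (t ^ 3)))"

end

theory Submission
  imports Defs
begin


lemma sin_zero_small: fixes x::real assumes "\<bar>x\<bar> < pi" "sin x = 0" shows "x = 0"
proof (rule ccontr)
  assume "x \<noteq> 0"
  then consider "0 < x" | "x < 0" by linarith
  then show False
  proof cases
    case 1 then have "sin x > 0" using assms by (intro sin_gt_zero) auto
    then show False using assms by simp
  next
    case 2 then have "sin (-x) > 0" using assms by (intro sin_gt_zero) auto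
    then show False using assms by simp
  qed
qed

lemma exp2_not_nonpos:
  fixes w :: complex assumes "\<bar>Im w\<bar> < pi/2"
  shows "exp (2 * w) \<notin> nonpos_Reals"
proof
  assume "exp (2 * w) \<in> nonpos_Reals"
  then have "Im (exp (2 * w)) = 0" "Re (exp (2 * w)) \<le> 0" unfolding complex_nonpos_Reals_iff by blast+
  then have h: "exp (Re (2 * w)) * sin (Im (2 * w)) = 0" "exp (Re (2 * w)) * cos (Im (2 * w)) \<le> 0"
    by (simp_all only: Im_exp Re_exp)
  then have "sin (Im (2 * w)) = 0" "cos (Im (2 * w)) \<le> 0"
  proof -
    have p: "exp (Re (2 * w)) > 0" by simp
    show "sin (Im (2 * w)) = 0" using h(1) by simp
    show "cos (Im (2 * w)) \<le> 0" using h(2) p by (simp add: mult_le_0_iff)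
  qed
  then have "sin (2 * Im w) = 0" "cos (2 * Im w) \<le> 0" by simp_all
  moreover have "\<bar>2 * Im w\<bar> < pi" using assms by linarith
  ultimately have "2 * Im w = 0" using sin_zero_small by blast
  with \<open>cos (2 * Im w) \<le> 0\<close> show False by simp
qed

lemma exp_2w: "exp (2 * w) = exp w * (exp w :: complex)"
  by (simp only: mult_2 exp_add)

lemma cosh_nz: fixes w :: complex assumes "norm w < 1" shows "cosh w \<noteq> 0"
proof
  assume h: "cosh w = 0"
  have "\<bar>Im w\<bar> < pi/2" using assms abs_Im_le_cmod[of w] pi_gt3 by linarith
  then have ne: "exp (2 * w) \<notin> nonpos_Reals" by (rule exp2_not_nonpos)
  from h have h2: "exp w + exp (-w) = 0" by (simp add: cosh_def)
  have "exp (2 * w) = exp w * (exp w + exp (-w)) - exp w * exp (-w)"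
    by (subst exp_2w) (simp add: algebra_simps)
  also have "\<dots> = -1" using h2 by (simp add: exp_minus_inverse)
  finally have "exp (2 * w) = -1" .
  with ne show False by (simp add: complex_nonpos_Reals_iff)
qed

lemma one_tanh: fixes w :: complex assumes "norm w < 1"
  shows "1 + tanh w = exp w / cosh w"
proof -
  have c: "cosh w \<noteq> 0" using cosh_nz[OF assms] .
  have "1 + tanh w = (cosh w + sinh w) / cosh w" using c by (simp add: tanh_def add_divide_distrib)
  then show ?thesis by (simp only: cosh_plus_sinh)
qed

lemma one_tanh_notin: fixes w :: complex assumes "norm w < 1"
  shows "1 + tanh w \<notin> nonpos_Reals"
proof
  assume h: "1 + tanh w \<in> nonpos_Reals"
  define t where "t = Re (1 + tanh w)"
  have t: "t \<le> 0" "1 + tanh w = of_real t" using h unfolding t_def complex_nonpos_Reals_iff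
    by (auto simp: complex_eq_iff)
  have "\<bar>Im w\<bar> < pi/2" using assms abs_Im_le_cmod[of w] pi_gt3 by linarith
  then have ne: "exp (2 * w) \<notin> nonpos_Reals" by (rule exp2_not_nonpos)
  define E where "E = exp (2 * w)"
  have c: "cosh w \<noteq> 0" using cosh_nz[OF assms] .
  have "exp w = of_real t * cosh w" using t(2) one_tanh[OF assms] c by (simp add: divide_eq_eq)
  then have "exp w * exp w = exp w * (of_real t * cosh w)" by simp
  also have "\<dots> = of_real t * (exp w * exp w + exp w * exp (-w)) / 2"
    by (simp add: cosh_def scaleR_conv_of_real field_simps)
  finally have "exp w * exp w = of_real t * (exp w * exp w + exp w * exp (-w)) / 2" .
  then have "E = of_real t * (E + 1) / 2" by (simp add: E_def exp_2w exp_minus_inverse)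
  then have "E * (2 - of_real t) = of_real t" by (simp add: algebra_simps)
  then have eq: "E * of_real (2 - t) = of_real t" by simp
  have nz: "(of_real (2 - t) :: complex) \<noteq> 0" using t(1) by (simp only: of_real_eq_0_iff)
  have "E = (E * of_real (2 - t)) / of_real (2 - t)"
    by (simp only: nonzero_mult_div_cancel_right[OF nz])
  then have "E = of_real t / of_real (2 - t)" by (simp only: eq)
  then have Ee: "E = of_real (t / (2 - t))" by (simp only: of_real_divide)
  have "t / (2 - t) \<le> 0" using t(1) by (simp add: divide_nonpos_pos)
  then have "(of_real (t / (2 - t)) :: complex) \<in> nonpos_Reals" by (simp only: nonpos_Reals_of_real_iff)
  then have "E \<in> nonpos_Reals" by (simp only: Ee)
  with ne show False by (simp add: E_def)
qed

lemma Re_csqrt_pos: assumes "z \<notin> nonpos_Reals" shows "Re (csqrt z) > 0"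
proof (rule ccontr)
  assume "\<not> Re (csqrt z) > 0"
  then have r: "Re (csqrt z) = 0" using Re_csqrt[of z] by linarith
  define y where "y = Im (csqrt z)"
  have c: "csqrt z = Complex 0 y" using r by (simp add: complex_eq_iff y_def)
  have "z = csqrt z * csqrt z" by (metis power2_csqrt power2_eq_square)
  also have "\<dots> = of_real (- (y * y))" unfolding c by (simp add: complex_eq_iff)
  finally have "z = of_real (- (y * y))" .
  then have "z \<in> nonpos_Reals" by (simp only: nonpos_Reals_of_real_iff) simp
  with assms show False by simp
qed

lemma frakB_analytic: "frakB analytic_on ball 0 1"
proof -
  have "(\<lambda>z. csqrt (1 + tanh z)) analytic_on ball 0 1"
    by (intro analytic_intros) (auto simp: cosh_nz one_tanh_notin)
  then show ?thesis unfolding frakB_def[abs_def] .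
qed

lemma frakB_holo: "frakB holomorphic_on ball 0 1"
  using frakB_analytic analytic_imp_holomorphic by blast

lemma frakB_0: "frakB 0 = 1" by (simp add: frakB_def)

lemma Re_frakB_pos: "norm w < 1 \<Longrightarrow> Re (frakB w) > 0"
  unfolding frakB_def by (intro Re_csqrt_pos one_tanh_notin)

lemma frakB_sq_cosh: "norm w < 1 \<Longrightarrow> frakB w ^ 2 * cosh w = exp w"
  unfolding frakB_def using one_tanh[of w] cosh_nz[of w] by simp

definition "Bf = fps_expansion frakB 0"

lemma frakB_fps: "frakB has_fps_expansion Bf"
  unfolding Bf_def by (rule has_fps_expansion_fps_expansion[OF _ _ frakB_holo]) auto

lemma Bf_eq: "Bf ^ 2 * (fps_const (1/2) * (fps_exp 1 + fps_exp (-1))) = fps_exp 1"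
proof -
  have "(\<lambda>w. frakB w ^ 2 * (1/2 * (exp w + exp (- w)))) has_fps_expansion
         Bf ^ 2 * (fps_const (1/2) * (fps_exp 1 + fps_exp (-1)))"
    by (intro fps_expansion_intros frakB_fps)
  moreover have "eventually (\<lambda>w. frakB w ^ 2 * (1/2 * (exp w + exp (- w))) = exp w) (nhds 0)"
  proof -
    have "eventually (\<lambda>w. w \<in> ball (0::complex) 1) (nhds 0)" by (intro eventually_nhds_in_open) auto
    then show ?thesis
    proof eventually_elim
      case (elim w)
      then have "norm w < 1" by simp
      from frakB_sq_cosh[OF this] show ?case by (simp add: cosh_def scaleR_conv_of_real field_simps)
    qed
  qed
  ultimately have "exp has_fps_expansion Bf ^ 2 * (fps_const (1/2) * (fps_exp 1 + fps_exp (-1)))"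
    using has_fps_expansion_cong[of "\<lambda>w. frakB w ^ 2 * (1/2 * (exp w + exp (- w)))" exp] by blast
  moreover have "exp has_fps_expansion fps_exp (1::complex)" using has_fps_expansion_exp1 by simp
  ultimately show ?thesis using fps_expansion_unique_complex by blast
qed

lemma Bf_0: "Bf $ 0 = 1"
  using fps_nth_fps_expansion[OF frakB_fps, of 0] frakB_0 by simp

lemma lin_solve: "(a::complex) * c + d = 0 \<Longrightarrow> c \<noteq> 0 \<Longrightarrow> a = - d / c"
proof -
  assume h1: "a * c + d = 0" and h2: "c \<noteq> 0"
  have "a * c = - d" using h1 by (simp add: eq_neg_iff_add_eq_0)
  then have "a * c / c = - d / c" by simp
  then show ?thesis using h2 by simp
qed

lemma Bf_coeffs: "Bf $ 1 = 1/2" "Bf $ 2 = -1/8" "Bf $ 3 = -5/48"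
proof -
  have e: "(Bf ^ 2 * (fps_const (1/2) * (fps_exp 1 + fps_exp (-1)))) $ n = fps_exp 1 $ n" for n
    using Bf_eq by simp
  have e1: "2 * Bf $ 1 = 1" using e[of 1] Bf_0
    by (simp add: power2_eq_square fps_mult_nth)
  show 1: "Bf $ 1 = 1/2" using e1 by (simp add: field_simps)
  have e2: "Bf $ 2 * 256 + Bf $ 1 * (Bf $ 1 * 128) = 0" using e[of 2] Bf_0
    by (simp add: power2_eq_square fps_mult_nth numeral_2_eq_2 field_simps)
  show 2: "Bf $ 2 = -1/8" using lin_solve[of "Bf $ 2" 256 32] e2 unfolding 1 by simp
  have e3: "Bf $ 1 * 110592 + (Bf $ 3 * 221184 + Bf $ 1 * (Bf $ 2 * 221184)) = 18432" using e[of 3] Bf_0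
    by (simp add: power2_eq_square fps_mult_nth numeral_3_eq_3 numeral_2_eq_2 field_simps)
  show "Bf $ 3 = -5/48" using lin_solve[of "Bf $ 3" 221184 23040] e3 unfolding 1 2 by (simp add: add.commute)
qed




lemma fps_of_eq:
  fixes f g :: "complex \<Rightarrow> complex"
  assumes "f has_fps_expansion F" "g has_fps_expansion G" "\<And>z. z \<in> ball 0 1 \<Longrightarrow> f z = g z"
  shows "F = G"
proof -
  have "eventually (\<lambda>z. z \<in> ball (0::complex) 1) (nhds 0)" by (intro eventually_nhds_in_open) auto
  then have "eventually (\<lambda>z. f z = g z) (nhds 0)" by (rule eventually_mono) (use assms(3) in auto)
  then have "g has_fps_expansion F" using assms(1) has_fps_expansion_cong[of f g F F] by blast
  then show ?thesis using assms(2) fps_expansion_unique_complex by blast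
qed

lemma holo_fps: "f holomorphic_on ball 0 1 \<Longrightarrow> f has_fps_expansion fps_expansion f 0"
  by (rule has_fps_expansion_fps_expansion) auto

lemma fps_nth0: "(f::complex\<Rightarrow>complex) has_fps_expansion F \<Longrightarrow> F $ 0 = f 0"
  using fps_nth_fps_expansion[of f F 0] by simp

lemma fps_nth1: "(f::complex\<Rightarrow>complex) has_fps_expansion F \<Longrightarrow> F $ 1 = deriv f 0"
  using fps_nth_fps_expansion[of f F 1] by simp

lemma mobius_ineq:
  fixes x a :: complex assumes "norm x < 1" "norm a < 1"
  shows "norm (x - a) < norm (1 - cnj a * x)"
proof -
  have "(norm (1 - cnj a * x))^2 - (norm (x - a))^2 = (1 - (norm a)^2) * (1 - (norm x)^2)"
    by (simp only: cmod_power2) (simp add: power2_eq_square algebra_simps)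
  moreover have "(1 - (norm a)^2) * (1 - (norm x)^2) > 0"
    using assms by (intro mult_pos_pos) (simp_all add: abs_square_less_1)
  ultimately have "(norm (x - a))^2 < (norm (1 - cnj a * x))^2" by linarith
  then show ?thesis using power2_less_imp_less by fastforce
qed

lemma mobius_den_nz:
  fixes x a :: complex assumes "norm x < 1" "norm a < 1"
  shows "1 - cnj a * x \<noteq> 0"
  using mobius_ineq[OF assms] by auto

lemma mobius_holo:
  assumes "w holomorphic_on ball 0 1" "\<And>z. z \<in> ball 0 1 \<Longrightarrow> norm (w z) < 1" "norm a < 1"
  shows "(\<lambda>z. (w z - a) / (1 - cnj a * w z)) holomorphic_on ball 0 1"
    and "\<And>z. z \<in> ball 0 1 \<Longrightarrow> norm ((w z - a) / (1 - cnj a * w z)) < 1"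
proof -
  show "(\<lambda>z. (w z - a) / (1 - cnj a * w z)) holomorphic_on ball 0 1"
    using assms mobius_den_nz by (auto intro!: holomorphic_intros)
  fix z :: complex assume "z \<in> ball 0 1"
  then have "norm (w z - a) < norm (1 - cnj a * w z)" using assms mobius_ineq by blast
  then show "norm ((w z - a) / (1 - cnj a * w z)) < 1"
    by (simp add: norm_divide divide_less_eq)
qed

lemma strict_or_const:
  assumes "w holomorphic_on ball 0 1" "\<And>z. z \<in> ball 0 1 \<Longrightarrow> norm (w z) \<le> 1"
  shows "(\<forall>z\<in>ball 0 1. norm (w z) < 1) \<or> (\<forall>z\<in>ball 0 1. w z = w 0)"
proof (cases "\<forall>z\<in>ball 0 1. norm (w z) < 1")
  case False
  then obtain z0 where z0: "z0 \<in> ball 0 1" "norm (w z0) \<ge> 1" by auto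
  have "w constant_on ball 0 1"
    by (rule maximum_modulus_principle[OF assms(1) _ _ _ order_refl z0(1)])
       (use assms(2) z0 in force)+
  then obtain c where "\<And>z. z \<in> ball 0 1 \<Longrightarrow> w z = c" by (auto simp: constant_on_def)
  then show ?thesis by simp
qed simp

lemma const_fps:
  fixes W :: "complex fps"
  assumes "w has_fps_expansion W" "\<And>z. z \<in> ball 0 1 \<Longrightarrow> w z = w 0" "n > 0"
  shows "W $ n = 0"
proof -
  have "(\<lambda>_. w 0) has_fps_expansion fps_const (w 0)" by (rule fps_expansion_intros)
  then have "W = fps_const (w 0)" using fps_of_eq[OF assms(1)] assms(2) by metis
  then show ?thesis using assms(3) by simp
qed

lemma schwarz_pick0:
  fixes H :: "complex fps"
  assumes holo: "h holomorphic_on ball 0 1" and bd: "\<And>z. z \<in> ball 0 1 \<Longrightarrow> norm (h z) \<le> 1"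
    and H: "h has_fps_expansion H"
  shows "norm (H $ 1) \<le> 1 - (norm (H $ 0))^2"
proof (cases "\<forall>z\<in>ball 0 1. norm (h z) < 1")
  case False
  then have c: "\<forall>z\<in>ball 0 1. h z = h 0" using strict_or_const[OF holo bd] by blast
  have "H $ 1 = 0" by (rule const_fps[OF H]) (use c in blast, simp)
  moreover have "norm (H $ 0) \<le> 1" using bd[of 0] fps_nth0[OF H] by simp
  ultimately show ?thesis by (simp add: abs_square_le_1)
next
  case True
  define a where "a = h 0"
  have a: "norm a < 1" using True a_def by simp
  define g where "g = (\<lambda>z. (h z - a) / (1 - cnj a * h z))"
  have gh: "g holomorphic_on ball 0 1" and gb: "\<And>z. z \<in> ball 0 1 \<Longrightarrow> norm (g z) < 1"
    using mobius_holo[OF holo _ a] True unfolding g_def by blast+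
  have g0: "g 0 = 0" by (simp add: g_def a_def)
  have dg: "norm (deriv g 0) \<le> 1"
    using Schwarz_Lemma(2)[OF gh g0, of 0] gb by auto
  define G where "G = fps_expansion g 0"
  have G: "g has_fps_expansion G" unfolding G_def using gh by (rule holo_fps)
  have eq: "G * (1 - fps_const (cnj a) * H) = H - fps_const a"
  proof (rule fps_of_eq)
    show "(\<lambda>z. g z * (1 - cnj a * h z)) has_fps_expansion G * (1 - fps_const (cnj a) * H)"
      by (intro fps_expansion_intros G H)
    show "(\<lambda>z. h z - a) has_fps_expansion H - fps_const a"
      by (intro fps_expansion_intros H)
    fix z :: complex assume "z \<in> ball 0 1"
    then show "g z * (1 - cnj a * h z) = h z - a"
      using mobius_den_nz[of "h z" a] True a by (simp add: g_def)
  qed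
  have H0: "H $ 0 = a" using fps_nth0[OF H] a_def by simp
  have G0: "G $ 0 = 0" using fps_nth0[OF G] g0 by simp
  have "(G * (1 - fps_const (cnj a) * H)) $ 1 = (H - fps_const a) $ 1" using eq by simp
  then have e1: "G $ 1 * (1 - cnj a * a) = H $ 1"
    using G0 H0 by (simp add: fps_mult_nth numeral_2_eq_2)
  have e2: "G $ 1 = deriv g 0" using fps_nth1[OF G] .
  have "norm (H $ 1) = norm (deriv g 0) * norm (1 - cnj a * a)"
    using e1 e2 by (metis norm_mult)
  also have "\<dots> \<le> norm (1 - cnj a * a)" by (rule mult_left_le_one_le) (use dg in auto)
  finally have "norm (H $ 1) \<le> norm (1 - cnj a * a)" .
  also have "1 - cnj a * a = of_real (1 - (norm a)^2)" 
    using complex_norm_square[of a] by (simp add: mult.commute)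
  also have "norm (of_real (1 - (norm a)^2) :: complex) = 1 - (norm a)^2"
  proof -
    have "(norm a)^2 \<le> 1" using a by (simp add: power_le_one)
    then show ?thesis by (simp only: norm_of_real)
  qed
  finally show ?thesis using H0 by simp
qed




lemma final_real:
  fixes r y :: real assumes r: "0 \<le> r" "r < 1" and y: "0 \<le> y"
  shows "(1 - r^2) * (1 - (y / (1 - r^2))^2) + r * y * (y / (1 - r^2)) + 5/6 * r * y + r^3/8 \<le> 1"
proof -
  have s: "1 - r^2 > 0" using r by (simp add: abs_square_less_1)
  have f: "1 - r^2 = (1 - r) * (1 + r)" by (simp add: power2_eq_square algebra_simps)
  have g: "S * (1 - (y / S)^2) + r * y * (y / S) = S - y^2 * (1 - r) / S" if "S > 0" for S :: real
    using that by (simp add: field_simps power2_eq_square)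
  have "(1 - r^2) * (1 - (y / (1 - r^2))^2) + r * y * (y / (1 - r^2))
        = (1 - r^2) - y^2 * (1 - r) / (1 - r^2)"
    by (rule g[OF s])
  also have "y^2 * (1 - r) / (1 - r^2) = y^2 / (1 + r)"
  proof -
    have "1 - r \<noteq> 0" using r by simp
    then have "(y^2 * (1 - r)) / ((1 + r) * (1 - r)) = y^2 / (1 + r)"
      by (rule nonzero_mult_divide_mult_cancel_right)
    then show ?thesis unfolding f by (simp add: mult.commute)
  qed
  finally have e: "(1 - r^2) * (1 - (y / (1 - r^2))^2) + r * y * (y / (1 - r^2)) = (1 - r^2) - y^2 / (1 + r)" .
  have key: "(1 + r) * (1 - ((1 - r^2) - y^2 / (1 + r) + 5/6 * r * y + r^3/8))
       = (y - 5/12 * r * (1 + r))^2 + r^2 * (1 + r) * (119 - 43 * r) / 144"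
    using r by (simp add: field_simps power2_eq_square power3_eq_cube)
  have "(y - 5/12 * r * (1 + r))^2 + r^2 * (1 + r) * (119 - 43 * r) / 144 \<ge> 0"
    using r by (intro add_nonneg_nonneg) (simp_all)
  then have "(1 + r) * (1 - ((1 - r^2) - y^2 / (1 + r) + 5/6 * r * y + r^3/8)) \<ge> 0" using key by simp
  then have "1 - ((1 - r^2) - y^2 / (1 + r) + 5/6 * r * y + r^3/8) \<ge> 0"
    using r by (simp add: zero_le_mult_iff)
  then show ?thesis using e by linarith
qed

lemma schur3:
  fixes W :: "complex fps"
  assumes holo: "w holomorphic_on ball 0 1" and bd: "\<And>z. z \<in> ball 0 1 \<Longrightarrow> norm (w z) \<le> 1"
    and Wf: "w has_fps_expansion W"
  shows "norm (W $ 2 - 5/6 * W $ 0 * W $ 1 - (W $ 0) ^ 3 / 8) \<le> 1"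
proof (cases "\<forall>z\<in>ball 0 1. norm (w z) < 1")
  case False
  then have c: "\<forall>z\<in>ball 0 1. w z = w 0" using strict_or_const[OF holo bd] by blast
  have "W $ 1 = 0" by (rule const_fps[OF Wf]) (use c in blast, simp)
  moreover have "W $ 2 = 0" by (rule const_fps[OF Wf]) (use c in blast, simp)
  moreover have "norm (W $ 0) \<le> 1" using bd[of 0] fps_nth0[OF Wf] by simp
  moreover have "norm (W $ 0) ^ 3 \<le> 1" using \<open>norm (W $ 0) \<le> 1\<close> by (simp add: power_le_one)
  ultimately show ?thesis by (simp add: norm_divide norm_power)
next
  case True
  define a where "a = w 0"
  have a: "norm a < 1" using True a_def by simp
  define g where "g = (\<lambda>z. (w z - a) / (1 - cnj a * w z))"
  have gh: "g holomorphic_on ball 0 1" and gb: "\<And>z. z \<in> ball 0 1 \<Longrightarrow> norm (g z) < 1"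
    using mobius_holo[OF holo _ a] True unfolding g_def by blast+
  have g0: "g 0 = 0" by (simp add: g_def a_def)
  define G where "G = fps_expansion g 0"
  have G: "g has_fps_expansion G" unfolding G_def using gh by (rule holo_fps)
  have eq: "G * (1 - fps_const (cnj a) * W) = W - fps_const a"
  proof (rule fps_of_eq)
    show "(\<lambda>z. g z * (1 - cnj a * w z)) has_fps_expansion G * (1 - fps_const (cnj a) * W)"
      by (intro fps_expansion_intros G Wf)
    show "(\<lambda>z. w z - a) has_fps_expansion W - fps_const a"
      by (intro fps_expansion_intros Wf)
    fix z :: complex assume "z \<in> ball 0 1"
    then show "g z * (1 - cnj a * w z) = w z - a"
      using mobius_den_nz[of "w z" a] True a by (simp add: g_def)
  qed
  have W0: "W $ 0 = a" using fps_nth0[OF Wf] a_def by simp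
  have G0: "G $ 0 = 0" using fps_nth0[OF G] g0 by simp
  have "(G * (1 - fps_const (cnj a) * W)) $ 1 = (W - fps_const a) $ 1" using eq by simp
  then have e1: "G $ 1 * (1 - cnj a * a) = W $ 1"
    using G0 W0 by (simp add: fps_mult_nth numeral_2_eq_2)
  have "(G * (1 - fps_const (cnj a) * W)) $ 2 = (W - fps_const a) $ 2" using eq by simp
  then have e2: "G $ 2 * (1 - cnj a * a) - G $ 1 * cnj a * W $ 1 = W $ 2"
    using G0 W0 by (simp add: fps_mult_nth numeral_2_eq_2 algebra_simps)
  obtain v where vh: "v holomorphic_on ball 0 1" and gv: "\<And>z. norm z < 1 \<Longrightarrow> g z = z * v z"
    and dv: "deriv g 0 = v 0"
    using Schwarz3[OF gh g0] by blast
  have vb: "norm (v z) \<le> 1" if z: "z \<in> ball 0 1" for z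
  proof (cases "z = 0")
    case True
    then show ?thesis using Schwarz_Lemma(2)[OF gh g0, of 0] gb dv by auto
  next
    case False
    have "norm (g z) \<le> norm z" using Schwarz_Lemma(1)[OF gh g0, of z] gb z by auto
    then have "norm z * norm (v z) \<le> norm z * 1" using gv[of z] z by (simp add: norm_mult)
    then show ?thesis using False by (simp add: mult_le_cancel_left_pos)
  qed
  define V where "V = fps_expansion v 0"
  have V: "v has_fps_expansion V" unfolding V_def using vh by (rule holo_fps)
  have GV: "G = fps_X * V"
  proof (rule fps_of_eq[OF G])
    show "(\<lambda>z. z * v z) has_fps_expansion fps_X * V" by (intro fps_expansion_intros V)
    fix z :: complex assume "z \<in> ball 0 1" then show "g z = z * v z" using gv by simp
  qed
  have G1: "G $ 1 = V $ 0" and G2: "G $ 2 = V $ 1" unfolding GV by (simp_all add: numeral_2_eq_2)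
  have sp: "norm (G $ 2) \<le> 1 - (norm (G $ 1))^2"
    using schwarz_pick0[OF vh vb V] unfolding G1 G2 by simp
  define r where "r = norm a"
  define y where "y = norm (W $ 1)"
  have r: "0 \<le> r" "r < 1" using a by (simp_all add: r_def)
  have y: "0 \<le> y" by (simp add: y_def)
  have ca: "cnj a * a = of_real (r^2)"
    using complex_norm_square[of a] by (simp add: mult.commute r_def)
  have s: "1 - r^2 > 0" using r by (simp add: abs_square_less_1)
  have ns: "norm (1 - cnj a * a) = 1 - r^2"
  proof -
    have "1 - cnj a * a = of_real (1 - r^2)" using ca by simp
    then show ?thesis using s by (simp only: norm_of_real)
  qed
  have nG1: "norm (G $ 1) = y / (1 - r^2)"
    using e1 s ns unfolding y_def by (metis norm_mult nonzero_eq_divide_eq less_irrefl)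
  have nW2: "norm (W $ 2) \<le> (1 - r^2) * norm (G $ 2) + r * y * (y / (1 - r^2))"
  proof -
    have "norm (W $ 2) \<le> norm (G $ 2 * (1 - cnj a * a)) + norm (G $ 1 * cnj a * W $ 1)"
      using e2[symmetric] norm_triangle_ineq4 by metis
    also have "\<dots> = (1 - r^2) * norm (G $ 2) + r * y * (y / (1 - r^2))"
      by (simp only: norm_mult ns nG1 complex_mod_cnj flip: r_def y_def) (simp add: algebra_simps)
    finally show ?thesis .
  qed
  have "norm (W $ 2 - 5/6 * W $ 0 * W $ 1 - (W $ 0) ^ 3 / 8)
        \<le> norm (W $ 2) + norm (5/6 * W $ 0 * W $ 1) + norm ((W $ 0) ^ 3 / 8)"
  proof -
    have "norm (W $ 2 - 5/6 * W $ 0 * W $ 1 - (W $ 0) ^ 3 / 8) \<le> norm (W $ 2 - 5/6 * W $ 0 * W $ 1) + norm ((W $ 0) ^ 3 / 8)"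
      by (rule norm_triangle_ineq4)
    moreover have "norm (W $ 2 - 5/6 * W $ 0 * W $ 1) \<le> norm (W $ 2) + norm (5/6 * W $ 0 * W $ 1)"
      by (rule norm_triangle_ineq4)
    ultimately show ?thesis by linarith
  qed
  also have "norm (5/6 * W $ 0 * W $ 1) = 5/6 * r * y"
    by (simp add: norm_mult W0 r_def y_def)
  also have "norm ((W $ 0) ^ 3 / 8) = r^3/8"
    by (simp add: norm_divide norm_power W0 r_def)
  also have "norm (W $ 2) + 5/6 * r * y + r^3/8
      \<le> (1 - r^2) * (1 - (y / (1 - r^2))^2) + r * y * (y / (1 - r^2)) + 5/6 * r * y + r^3/8"
  proof -
    have "(1 - r^2) * norm (G $ 2) \<le> (1 - r^2) * (1 - (y / (1 - r^2))^2)"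
      using sp s nG1 by (intro mult_left_mono) auto
    then show ?thesis using nW2 by linarith
  qed
  also have "\<dots> \<le> 1" by (rule final_real[OF r y])
  finally show ?thesis .
qed




lemma comp_coeffs:
  fixes B P :: "complex fps" assumes P0: "P $ 0 = 0"
  shows "(B oo P) $ 1 = B $ 1 * P $ 1"
    and "(B oo P) $ 2 = B $ 1 * P $ 2 + B $ 2 * (P $ 1)^2"
    and "(B oo P) $ 3 = B $ 1 * P $ 3 + 2 * B $ 2 * P $ 1 * P $ 2 + B $ 3 * (P $ 1)^3"
proof -
  have p1: "(P^1) $ n = P $ n" for n by simp
  have p2: "(P^2) $ n = (\<Sum>i=0..n. P $ i * P $ (n - i))" for n by (simp add: power2_eq_square fps_mult_nth)
  have p3: "(P^3) $ n = (\<Sum>i=0..n. P $ i * (P^2) $ (n - i))" for n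
    by (simp add: power_Suc fps_mult_nth numeral_3_eq_3 power2_eq_square[symmetric])
  show "(B oo P) $ 1 = B $ 1 * P $ 1"
    by (simp add: fps_compose_nth)
  show "(B oo P) $ 2 = B $ 1 * P $ 2 + B $ 2 * (P $ 1)^2"
    by (simp add: fps_compose_nth numeral_2_eq_2 fps_mult_nth P0 power2_eq_square)
  show "(B oo P) $ 3 = B $ 1 * P $ 3 + 2 * B $ 2 * P $ 1 * P $ 2 + B $ 3 * (P $ 1)^3"
    by (simp add: fps_compose_nth numeral_3_eq_3 numeral_2_eq_2 fps_mult_nth P0 power3_eq_cube power2_eq_square algebra_simps)
qed

lemma Bf_coeffs_Suc: "Bf $ Suc 0 = 1/2" "Bf $ Suc (Suc 0) = -1/8" "Bf $ Suc (Suc (Suc 0)) = -5/48"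
  using Bf_coeffs by (simp_all add: numeral_2_eq_2 numeral_3_eq_3)

lemma four_Suc: "(4::nat) = Suc (Suc (Suc (Suc 0)))" by simp

lemma taylor_coeff_eq: "f holomorphic_on ball 0 1 \<Longrightarrow> taylor_coeff f n = fps_expansion f 0 $ n"
  using fps_nth_fps_expansion[OF holo_fps, of f n] by (simp add: taylor_coeff_def)

lemma main_ineq:
  assumes "f \<in> class_BT"
  shows "cmod (taylor_coeff f 2 * taylor_coeff f 3 - taylor_coeff f 4) \<le> 1 / 8"
proof -
  have fh: "f holomorphic_on ball 0 1" using assms by (simp add: class_BT_def class_S_def)
  obtain om where omh: "om holomorphic_on ball 0 1" and omb: "om ` ball 0 1 \<subseteq> ball 0 1"
    and om0: "om 0 = 0" and dfe: "\<And>z. z \<in> ball 0 1 \<Longrightarrow> deriv f z = frakB (om z)"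
    using assms by (auto simp: class_BT_def subordinate_def)
  define F where "F = fps_expansion f 0"
  have F: "f has_fps_expansion F" unfolding F_def using fh by (rule holo_fps)
  define Om where "Om = fps_expansion om 0"
  have Om: "om has_fps_expansion Om" unfolding Om_def using omh by (rule holo_fps)
  have Om0: "Om $ 0 = 0" using fps_nth0[OF Om] om0 by simp
  have FB: "fps_deriv F = (Bf oo Om)"
  proof (rule fps_of_eq)
    show "deriv f has_fps_expansion fps_deriv F" by (rule has_fps_expansion_deriv[OF F])
    show "(frakB \<circ> om) has_fps_expansion (Bf oo Om)"
      by (rule has_fps_expansion_compose[OF frakB_fps Om Om0])
    fix z :: complex assume "z \<in> ball 0 1" then show "deriv f z = (frakB \<circ> om) z" using dfe by simp
  qed
  have omb': "norm (om z) < 1" if "norm z < 1" for z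
  proof -
    have "z \<in> ball 0 1" using that by simp
    then have "om z \<in> ball 0 1" using omb by blast
    then show ?thesis by simp
  qed
  obtain w where wh: "w holomorphic_on ball 0 1" and ow: "\<And>z. norm z < 1 \<Longrightarrow> om z = z * w z"
    and dw: "deriv om 0 = w 0"
    using Schwarz3[OF omh om0] by blast
  have wb: "norm (w z) \<le> 1" if z: "z \<in> ball 0 1" for z
  proof (cases "z = 0")
    case True
    then show ?thesis using Schwarz_Lemma(2)[OF omh om0 omb', of 0] dw by auto
  next
    case False
    have "norm (om z) \<le> norm z" using Schwarz_Lemma(1)[OF omh om0 omb', of z] z by auto
    then have "norm z * norm (w z) \<le> norm z * 1" using ow[of z] z by (simp add: norm_mult)
    then show ?thesis using False by (simp add: mult_le_cancel_left_pos)
  qed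
  define W where "W = fps_expansion w 0"
  have W: "w has_fps_expansion W" unfolding W_def using wh by (rule holo_fps)
  have OW: "Om = fps_X * W"
  proof (rule fps_of_eq[OF Om])
    show "(\<lambda>z. z * w z) has_fps_expansion fps_X * W" by (intro fps_expansion_intros W)
    fix z :: complex assume "z \<in> ball 0 1" then show "om z = z * w z" using ow by simp
  qed
  have O1: "Om $ 1 = W $ 0" and O2: "Om $ 2 = W $ 1" and O3: "Om $ 3 = W $ 2"
    unfolding OW by (simp_all add: numeral_2_eq_2 numeral_3_eq_3)
  have c1: "2 * F $ 2 = W $ 0 / 2"
    using arg_cong[OF FB, of "\<lambda>G. fps_nth G 1"] comp_coeffs(1)[OF Om0, of Bf] Bf_coeffs_Suc O1
    by (simp add: numeral_2_eq_2)
  have c2: "3 * F $ 3 = W $ 1 / 2 - (W $ 0)^2 / 8"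
    using arg_cong[OF FB, of "\<lambda>G. fps_nth G 2"] comp_coeffs(2)[OF Om0, of Bf] Bf_coeffs_Suc O1 O2
    by (simp add: numeral_3_eq_3 numeral_2_eq_2)
  have c3: "4 * F $ 4 = W $ 2 / 2 - W $ 0 * W $ 1 / 4 - 5/48 * (W $ 0)^3"
    using arg_cong[OF FB, of "\<lambda>G. fps_nth G 3"] comp_coeffs(3)[OF Om0, of Bf] Bf_coeffs_Suc O1 O2 O3
    by (simp add: numeral_3_eq_3 numeral_2_eq_2 four_Suc)
  have key: "F $ 2 * F $ 3 - F $ 4 = - (1/8) * (W $ 2 - 5/6 * W $ 0 * W $ 1 - (W $ 0)^3 / 8)"
  proof -
    have "F $ 2 = (2 * F $ 2) / 2" by simp
    then have a2: "F $ 2 = (W $ 0 / 2) / 2" by (simp only: c1)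
    have "F $ 3 = (3 * F $ 3) / 3" by simp
    then have a3: "F $ 3 = (W $ 1 / 2 - (W $ 0)^2 / 8) / 3" by (simp only: c2)
    have "F $ 4 = (4 * F $ 4) / 4" by simp
    then have a4: "F $ 4 = (W $ 2 / 2 - W $ 0 * W $ 1 / 4 - 5/48 * (W $ 0)^3) / 4" by (simp only: c3)
    show ?thesis unfolding a2 a3 a4 by (simp add: field_simps power2_eq_square power3_eq_cube)
  qed
  have "norm (W $ 2 - 5/6 * W $ 0 * W $ 1 - (W $ 0)^3 / 8) \<le> 1" by (rule schur3[OF wh wb W])
  then have "cmod (F $ 2 * F $ 3 - F $ 4) \<le> 1/8" unfolding key by (simp add: norm_mult)
  then show ?thesis using taylor_coeff_eq[OF fh] by (simp add: F_def)
qed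




definition q3 :: "complex \<Rightarrow> complex" where "q3 t = frakB (t ^ 3)"

lemma cube_in_ball: "norm (z::complex) < 1 \<Longrightarrow> norm (z ^ 3) < 1"
  by (simp add: norm_power power_less_one_iff) 

lemma q3_holo: "q3 holomorphic_on ball 0 1"
proof -
  have "(frakB \<circ> (\<lambda>t. t ^ 3)) holomorphic_on ball 0 1"
    by (rule holomorphic_on_compose_gen[OF _ frakB_holo]) (auto intro!: holomorphic_intros simp: cube_in_ball)
  then show ?thesis by (simp add: q3_def[abs_def] o_def)
qed

lemma f3_alt: "f3 z = contour_integral (linepath 0 z) q3"
  unfolding f3_def q3_def frakB_def by simp

lemma f3_deriv: assumes "x \<in> ball 0 1" shows "(f3 has_field_derivative q3 x) (at x)"
proof -
  have contf: "continuous_on (ball 0 1) q3" using q3_holo holomorphic_on_imp_continuous_on by blast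
  have a_cs: "closed_segment 0 y \<subseteq> ball 0 1" if "y \<in> ball 0 1" for y :: complex
    using that by (intro closed_segment_subset) (auto simp: convex_ball)
  have 0: "contour_integral (linepath 0 b) q3 + contour_integral (linepath b c) q3 +
           contour_integral (linepath c 0) q3 = 0" if "closed_segment b c \<subseteq> ball 0 1" for b c :: complex
  proof -
    have abcs: "convex hull {0, b, c} \<subseteq> ball 0 1"
      using that by (intro hull_minimal) auto
    have "(q3 has_contour_integral 0) (linepath 0 b +++ linepath b c +++ linepath c 0)"
      using abcs holomorphic_on_subset[OF q3_holo abcs] 
      by (intro Cauchy_theorem_triangle) (auto)
    then show ?thesis by (rule has_chain_integral_chain_integral3)
  qed
  have "((\<lambda>x. contour_integral (linepath 0 x) q3) has_field_derivative q3 x) (at x)"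
    by (rule triangle_contour_integrals_starlike_primitive[OF contf _ _ assms a_cs 0]) auto
  then show ?thesis unfolding f3_alt[abs_def] .
qed

lemma f3_holo: "f3 holomorphic_on ball 0 1"
proof (rule iffD2[OF holomorphic_on_open[OF open_ball]])
  show "\<forall>x\<in>ball 0 1. \<exists>f'. (f3 has_field_derivative f') (at x)" using f3_deriv by blast
qed

lemma deriv_f3: "z \<in> ball 0 1 \<Longrightarrow> deriv f3 z = q3 z"
  using f3_deriv DERIV_imp_deriv by blast

lemma f3_0: "f3 0 = 0" by (simp add: f3_alt)

lemma Re_q3_pos: "norm z < 1 \<Longrightarrow> Re (q3 z) > 0"
  unfolding q3_def by (intro Re_frakB_pos cube_in_ball)

lemma f3_inj: "inj_on f3 (ball 0 1)"
proof (rule inj_onI, rule ccontr)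
  fix z1 z2 :: complex
  assume z1: "z1 \<in> ball 0 1" and z2: "z2 \<in> ball 0 1" and eq: "f3 z1 = f3 z2" and ne: "z1 \<noteq> z2"
  define d where "d = z2 - z1"
  have dnz: "d \<noteq> 0" using ne by (simp add: d_def)
  define phi where "phi = (\<lambda>t::real. Re (cnj d * f3 (z1 + of_real t * d)))"
  have inb: "z1 + of_real t * d \<in> ball 0 1" if "0 \<le> t" "t \<le> 1" for t
  proof -
    have "z1 + of_real t * d = (1 - t) *\<^sub>R z1 + t *\<^sub>R z2"
      by (simp add: d_def scaleR_conv_of_real algebra_simps)
    moreover have "(1 - t) *\<^sub>R z1 + t *\<^sub>R z2 \<in> ball 0 1"
      using convexD_alt[OF convex_ball z1 z2, of t] that by (simp add: algebra_simps)
    ultimately show ?thesis by simp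
  qed
  have "phi 0 < phi 1"
  proof (rule DERIV_pos_imp_increasing[of 0 1 phi])
    fix t :: real assume t: "0 \<le> t" "t \<le> 1"
    have b: "z1 + of_real t * d \<in> ball 0 1" using inb[OF t] .
    have D1: "((\<lambda>u. cnj d * f3 (z1 + u * d)) has_field_derivative
              (cnj d * (q3 (z1 + of_real t * d) * d))) (at (of_real t))"
    proof -
      have Dg: "((\<lambda>u. z1 + u * d) has_field_derivative d) (at (of_real t))"
        by (auto intro!: derivative_eq_intros)
      have "((\<lambda>u. f3 (z1 + u * d)) has_field_derivative q3 (z1 + of_real t * d) * d) (at (of_real t))"
        using DERIV_chain2[where f=f3 and g="\<lambda>u. z1 + u * d", OF f3_deriv[OF b] Dg] by simp
      then show ?thesis by (rule DERIV_cmult)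
    qed
    have D2: "((\<lambda>t. cnj d * f3 (z1 + of_real t * d)) has_vector_derivative
              (cnj d * (q3 (z1 + of_real t * d) * d))) (at t)"
      using has_vector_derivative_real_field[OF D1] by simp
    have D3: "(phi has_real_derivative Re (cnj d * (q3 (z1 + of_real t * d) * d))) (at t)"
      unfolding phi_def by (rule has_field_derivative_Re[OF D2])
    have "cnj d * (q3 (z1 + of_real t * d) * d) = (d * cnj d) * q3 (z1 + of_real t * d)"
      by (simp only: ac_simps)
    also have "d * cnj d = of_real ((norm d)^2)" using complex_norm_square[of d] by simp
    finally have X: "cnj d * (q3 (z1 + of_real t * d) * d) = of_real ((norm d)^2) * q3 (z1 + of_real t * d)" .
    have ReX: "Re (of_real r * Q) = r * Re Q" for r and Q :: complex by simp
    have "Re (cnj d * (q3 (z1 + of_real t * d) * d)) = (norm d)^2 * Re (q3 (z1 + of_real t * d))"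
      unfolding X by (rule ReX)
    moreover have "Re (q3 (z1 + of_real t * d)) > 0" using b Re_q3_pos by simp
    ultimately have "Re (cnj d * (q3 (z1 + of_real t * d) * d)) > 0" using dnz by simp
    then show "\<exists>y. (phi has_real_derivative y) (at t) \<and> y > 0" using D3 by blast
  qed simp
  moreover have "phi 0 = phi 1" using eq by (simp add: phi_def d_def)
  ultimately show False by simp
qed

lemma f3_class_BT: "f3 \<in> class_BT"
proof -
  have "f3 \<in> class_S"
    unfolding class_S_def using f3_holo f3_inj f3_0 deriv_f3[of 0]
    by (simp add: q3_def frakB_0)
  moreover have "subordinate (deriv f3) frakB"
    unfolding subordinate_def
  proof (intro exI[of _ "\<lambda>z. z ^ 3"] conjI ballI)
    show "(\<lambda>z. z ^ 3) holomorphic_on ball 0 1" by (intro holomorphic_intros)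
    show "(\<lambda>z::complex. z ^ 3) ` ball 0 1 \<subseteq> ball 0 1" using cube_in_ball by auto
    show "(0::complex) ^ 3 = 0" by simp
    fix z :: complex assume "z \<in> ball 0 1" then show "deriv f3 z = frakB (z ^ 3)"
      using deriv_f3 by (simp add: q3_def)
  qed
  ultimately show ?thesis by (simp add: class_BT_def)
qed

lemma f3_coeffs: "cmod (taylor_coeff f3 2 * taylor_coeff f3 3 - taylor_coeff f3 4) = 1 / 8"
proof -
  define F where "F = fps_expansion f3 0"
  have F: "f3 has_fps_expansion F" unfolding F_def using f3_holo by (rule holo_fps)
  have P0: "(fps_X ^ 3 :: complex fps) $ 0 = 0" by simp
  have FB: "fps_deriv F = (Bf oo fps_X ^ 3)"
  proof (rule fps_of_eq)
    show "deriv f3 has_fps_expansion fps_deriv F" by (rule has_fps_expansion_deriv[OF F])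
    show "(frakB \<circ> (\<lambda>z. z ^ 3)) has_fps_expansion (Bf oo fps_X ^ 3)"
      by (rule has_fps_expansion_compose[OF frakB_fps has_fps_expansion_fps_X_power P0])
    fix z :: complex assume "z \<in> ball 0 1" then show "deriv f3 z = (frakB \<circ> (\<lambda>z. z ^ 3)) z"
      using deriv_f3 by (simp add: q3_def)
  qed
  have X1: "(fps_X ^ 3 :: complex fps) $ 1 = 0" and X2: "(fps_X ^ 3 :: complex fps) $ 2 = 0"
    and X3: "(fps_X ^ 3 :: complex fps) $ 3 = 1" by (simp_all add: fps_X_power_iff)
  have c1: "2 * F $ 2 = 0"
    using arg_cong[OF FB, of "\<lambda>G. fps_nth G 1"] comp_coeffs(1)[OF P0, of Bf] X1
    by (simp add: numeral_2_eq_2)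
  have c2: "3 * F $ 3 = 0"
    using arg_cong[OF FB, of "\<lambda>G. fps_nth G 2"] comp_coeffs(2)[OF P0, of Bf] X1 X2
    by (simp add: numeral_3_eq_3 numeral_2_eq_2)
  have c3: "4 * F $ 4 = 1/2"
    using arg_cong[OF FB, of "\<lambda>G. fps_nth G 3"] comp_coeffs(3)[OF P0, of Bf] X1 X2 X3 Bf_coeffs_Suc
    by (simp add: numeral_3_eq_3 numeral_2_eq_2 four_Suc)
  have a2: "F $ 2 = 0" using c1 by simp
  have "F $ 4 = (4 * F $ 4) / 4" by simp
  then have a4: "F $ 4 = (1/2) / 4" by (simp only: c3)
  have "cmod (F $ 2 * F $ 3 - F $ 4) = 1/8" unfolding a2 a4 by simp
  then show ?thesis using taylor_coeff_eq[OF f3_holo] by (simp add: F_def)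
qed



theorem theorem5p1:
  shows "(\<forall>f\<in>class_BT.
            cmod (taylor_coeff f 2 * taylor_coeff f 3 - taylor_coeff f 4) \<le> 1 / 8)
       \<and> f3 \<in> class_BT
       \<and> cmod (taylor_coeff f3 2 * taylor_coeff f3 3 - taylor_coeff f3 4) = 1 / 8"
  using main_ineq f3_class_BT f3_coeffs by blast

end
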